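(* Let $p\ne2$ be a rational prime and let $\mathbf{f}\in H_{1,2,2}$ be primitive to $p$ with $N(\mathbf{f})\equiv0\pmod p$. Then there exists $\widehat{\mathbf{f}}\in H_{1,2,2}$ with $\widehat{\mathbf{f}}-\mathbf{f}\in pH_{1,2,2}$, $N(\widehat{\mathbf{f}})\equiv0\pmod p$ and $N(\widehat{\mathbf{f}})\not\equiv0\pmod{p^2}$.
   Context: Let $\mathbf{i},\mathbf{j},\mathbf{k}$ be the standard quaternion units; $\overline{\mathbf{q}}$ is quaternion conjugation and $N(\mathbf{q})=\mathbf{q}\overline{\mathbf{q}}$. $H_{1,2,2}$ is the subring of the quaternions equal to the $\mathbb{Z}$-module generated by $\mathbf{v}_1=1$, $\mathbf{v}_2=\mathbf{i}$, $\mathbf{v}_3=\tfrac12(1+\mathbf{i}+\sqrt2\,\mathbf{j})$, $\mathbf{v}_4=\tfrac12(1+\mathbf{i}+\sqrt2\,\mathbf{k})$. An element $g_1\mathbf{v}_1+g_2\mathbf{v}_2+g_3\mathbf{v}_3+g_4\mathbf{v}_4$ ($g_i\in\mathbb{Z}$) is primitive to $p$ if $\gcd(g_1,g_2,g_3,g_4,p)=1$. *)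

theory Defs
  imports Complex_Main "HOL-Computational_Algebra.Primes"
begin

datatype quat = Quat (Re: real) (Im1: real) (Im2: real) (Im3: real)

definition qadd :: "quat \<Rightarrow> quat \<Rightarrow> quat" where
  "qadd x y = Quat (Re x + Re y) (Im1 x + Im1 y) (Im2 x + Im2 y) (Im3 x + Im3 y)"

definition qsub :: "quat \<Rightarrow> quat \<Rightarrow> quat" where
  "qsub x y = Quat (Re x - Re y) (Im1 x - Im1 y) (Im2 x - Im2 y) (Im3 x - Im3 y)"

definition qscale :: "real \<Rightarrow> quat \<Rightarrow> quat" where
  "qscale r x = Quat (r * Re x) (r * Im1 x) (r * Im2 x) (r * Im3 x)"

text \<open>Hamilton product (i^2 = j^2 = k^2 = ijk = -1).\<close>
definition qmult :: "quat \<Rightarrow> quat \<Rightarrow> quat" where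
  "qmult x y = Quat
     (Re x * Re y - Im1 x * Im1 y - Im2 x * Im2 y - Im3 x * Im3 y)
     (Re x * Im1 y + Im1 x * Re y + Im2 x * Im3 y - Im3 x * Im2 y)
     (Re x * Im2 y - Im1 x * Im3 y + Im2 x * Re y + Im3 x * Im1 y)
     (Re x * Im3 y + Im1 x * Im2 y - Im2 x * Im1 y + Im3 x * Re y)"

definition qcnj :: "quat \<Rightarrow> quat" where
  "qcnj x = Quat (Re x) (- Im1 x) (- Im2 x) (- Im3 x)"

text \<open>N(q) = q * conj q (a quaternion; it is real, i.e. has zero imaginary part).\<close>
definition qnorm :: "quat \<Rightarrow> quat" where
  "qnorm q = qmult q (qcnj q)"

definition qreal :: "real \<Rightarrow> quat" where
  "qreal r = Quat r 0 0 0"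

definition v1 :: quat where "v1 = Quat 1 0 0 0"
definition v2 :: quat where "v2 = Quat 0 1 0 0"
definition v3 :: quat where "v3 = Quat (1/2) (1/2) (sqrt 2 / 2) 0"
definition v4 :: quat where "v4 = Quat (1/2) (1/2) 0 (sqrt 2 / 2)"

definition hcomb :: "int \<Rightarrow> int \<Rightarrow> int \<Rightarrow> int \<Rightarrow> quat" where
  "hcomb g1 g2 g3 g4 = qadd (qadd (qscale (of_int g1) v1) (qscale (of_int g2) v2))
                            (qadd (qscale (of_int g3) v3) (qscale (of_int g4) v4))"

definition H122 :: "quat set" where
  "H122 = {hcomb g1 g2 g3 g4 | g1 g2 g3 g4. True}"

definition primitive_to :: "int \<Rightarrow> quat \<Rightarrow> bool" where
  "primitive_to p f \<longleftrightarrow> (\<exists>g1 g2 g3 g4. f = hcomb g1 g2 g3 g4 \<and>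
      gcd g1 (gcd g2 (gcd g3 (gcd g4 p))) = 1)"

definition norm_cong0 :: "quat \<Rightarrow> int \<Rightarrow> bool" where
  "norm_cong0 q m \<longleftrightarrow> (\<exists>k::int. qnorm q = qreal (of_int (m * k)))"

end

theory Submission
  imports Defs
begin

definition QF :: "int \<Rightarrow> int \<Rightarrow> int \<Rightarrow> int \<Rightarrow> int" where
  "QF a b c d = a^2 + b^2 + c^2 + d^2 + c*d + (a+b)*(c+d)"

lemma hcomb_norm: "qnorm (hcomb a b c d) = qreal (of_int (QF a b c d))"
proof -
  have s: "sqrt 2 * sqrt 2 = (2::real)" by simp
  show ?thesis
    unfolding qnorm_def hcomb_def qadd_def qscale_def v1_def v2_def v3_def v4_def qmult_def qcnj_def qreal_def QF_def
    by (simp add: algebra_simps power2_eq_square s)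
qed

lemma hcomb_sub: "qsub (hcomb (a + p*x) (b + p*y) (c + p*z) (d + p*w)) (hcomb a b c d)
   = qscale (of_int p) (hcomb x y z w)"
  unfolding qsub_def hcomb_def qadd_def qscale_def v1_def v2_def v3_def v4_def
  by (simp add: algebra_simps)

lemma hcomb_in: "hcomb a b c d \<in> H122"
  unfolding H122_def by blast

lemma normc_iff: "norm_cong0 (hcomb a b c d) m \<longleftrightarrow> m dvd QF a b c d"
  unfolding norm_cong0_def hcomb_norm qreal_def dvd_def
  by (auto simp del: of_int_mult simp add: of_int_eq_iff[symmetric] of_int_mult[symmetric])

lemma odd_prime_dvd2: assumes "prime (p::int)" "p \<noteq> 2" "p dvd 2*x" shows "p dvd x"
proof -
  have "\<not> p dvd 2"
  proof
    assume "p dvd 2"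
    then have "p \<le> 2" by (simp add: zdvd_imp_le)
    moreover have "p \<ge> 2" using assms(1) prime_ge_2_int by blast
    ultimately show False using assms(2) by simp
  qed
  then show ?thesis using assms prime_dvd_mult_iff by blast
qed

theorem lemma39:
  fixes p :: int and f :: quat
  assumes "prime p" and "p \<noteq> 2"
    and "f \<in> H122" and "primitive_to p f"
    and "norm_cong0 f p"
  shows "\<exists>fh \<in> H122. (\<exists>h \<in> H122. qsub fh f = qscale (of_int p) h)
            \<and> norm_cong0 fh p \<and> \<not> norm_cong0 fh (p^2)"
proof -
  obtain a b c d where f: "f = hcomb a b c d" and g: "gcd a (gcd b (gcd c (gcd d p))) = 1"
    using assms(4) unfolding primitive_to_def by metis
  have pQ: "p dvd QF a b c d" using assms(5) f normc_iff by simp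
  have key: "\<exists>x y z w. \<not> p^2 dvd QF (a + p*x) (b + p*y) (c + p*z) (d + p*w)
              \<and> p dvd QF (a + p*x) (b + p*y) (c + p*z) (d + p*w)"
  proof (cases "p^2 dvd QF a b c d")
    case False
    then show ?thesis using pQ by (intro exI[of _ 0]) simp
  next
    case True
    then obtain k where k: "QF a b c d = p^2 * k" by (auto simp: dvd_def)
    define d1 where "d1 = 2*a + c + d"
    define d2 where "d2 = 2*b + c + d"
    define d3 where "d3 = 2*c + d + a + b"
    define d4 where "d4 = 2*d + c + a + b"
    have e1: "QF (a + p*1) (b + p*0) (c + p*0) (d + p*0) = p^2*(k+1) + p*d1"
      using k unfolding QF_def d1_def by (simp add: algebra_simps power2_eq_square)
    have e2: "QF (a + p*0) (b + p*1) (c + p*0) (d + p*0) = p^2*(k+1) + p*d2"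
      using k unfolding QF_def d2_def by (simp add: algebra_simps power2_eq_square)
    have e3: "QF (a + p*0) (b + p*0) (c + p*1) (d + p*0) = p^2*(k+1) + p*d3"
      using k unfolding QF_def d3_def by (simp add: algebra_simps power2_eq_square)
    have e4: "QF (a + p*0) (b + p*0) (c + p*0) (d + p*1) = p^2*(k+1) + p*d4"
      using k unfolding QF_def d4_def by (simp add: algebra_simps power2_eq_square)
    have p0: "p \<noteq> 0" using assms(1) by auto
    have gen: "\<not> p^2 dvd p^2*(k+1) + p*e \<and> p dvd p^2*(k+1) + p*e" if "\<not> p dvd e" for e
    proof
      show "\<not> p^2 dvd p^2*(k+1) + p*e"
      proof
        assume "p^2 dvd p^2*(k+1) + p*e"
        then have "p^2 dvd p*e" by (simp add: dvd_add_right_iff)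
        then have "p*p dvd p*e" by (simp add: power2_eq_square)
        then show False using that p0 by simp
      qed
      show "p dvd p^2*(k+1) + p*e" by (simp add: power2_eq_square)
    qed
    have "\<not> (p dvd d1 \<and> p dvd d2 \<and> p dvd d3 \<and> p dvd d4)"
    proof
      assume H: "p dvd d1 \<and> p dvd d2 \<and> p dvd d3 \<and> p dvd d4"
      have "p dvd (d3 + d4) - (d1 + d2)" using H by auto
      then have s34: "p dvd c + d" unfolding d1_def d2_def d3_def d4_def by (simp add: algebra_simps)
      have "p dvd d3 - d4" using H by auto
      then have m34: "p dvd c - d" unfolding d3_def d4_def by (simp add: algebra_simps)
      have s34b: "p dvd 2*(c+d)" using s34 by (rule dvd_mult)
      have "p dvd (d1 + d2) - 2*(c+d)" using H s34b by (intro dvd_diff dvd_add) auto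
      then have "p dvd 2*(a+b)" unfolding d1_def d2_def by (simp add: algebra_simps)
      then have s12: "p dvd a + b" using odd_prime_dvd2 assms(1,2) by blast
      have "p dvd d1 - d2" using H by auto
      then have "p dvd 2*(a-b)" unfolding d1_def d2_def by (simp add: algebra_simps)
      then have m12: "p dvd a - b" using odd_prime_dvd2 assms(1,2) by blast
      have "p dvd 2*a" using dvd_add[OF s12 m12] by (simp add: algebra_simps)
      then have pa: "p dvd a" using odd_prime_dvd2 assms(1,2) by blast
      have "p dvd 2*b" using dvd_diff[OF s12 m12] by (simp add: algebra_simps)
      then have pb: "p dvd b" using odd_prime_dvd2 assms(1,2) by blast
      have "p dvd 2*c" using dvd_add[OF s34 m34] by (simp add: algebra_simps)
      then have pc: "p dvd c" using odd_prime_dvd2 assms(1,2) by blast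
      have "p dvd 2*d" using dvd_diff[OF s34 m34] by (simp add: algebra_simps)
      then have pd: "p dvd d" using odd_prime_dvd2 assms(1,2) by blast
      have "p dvd gcd a (gcd b (gcd c (gcd d p)))" using pa pb pc pd by simp
      then have "p dvd 1" using g by simp
      then show False using assms(1) by (simp add: prime_int_iff)
    qed
    then show ?thesis using gen e1 e2 e3 e4 by metis
  qed
  then obtain x y z w where xyz: "\<not> p^2 dvd QF (a + p*x) (b + p*y) (c + p*z) (d + p*w)"
     "p dvd QF (a + p*x) (b + p*y) (c + p*z) (d + p*w)" by blast
  show ?thesis
    apply (rule bexI[of _ "hcomb (a + p*x) (b + p*y) (c + p*z) (d + p*w)"])
     apply (intro conjI bexI[of _ "hcomb x y z w"])
    using xyz by (auto simp: f hcomb_sub hcomb_in normc_iff)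
qed

end
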